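(* Let $p,q$ be primes with $p\equiv 1\pmod 4$, $q\equiv 3\pmod 4$ and $q-p=2$, having a common primitive root $g$ (so $\gcd(p-1,q-1)=2$). Let $s$ be the balanced Whiteman generalized cyclotomic sequence of period $N=pq$ defined in the context. Then the 2-adic complexity of $s$ is maximal: $\varphi_2(s)=N$.
   Context: Let $N=pq$ and $e=(p-1)(q-1)/2$. Let $x$ be the unique element of $\mathbb{Z}_N$ with $x\equiv g\pmod p$ and $x\equiv 1\pmod q$. The Whiteman generalized cyclotomic classes of order 2 are $D_i=\{g^{s}x^{i}\bmod N: s=0,1,\dots,e-1\}$ for $i=0,1$; they partition $\mathbb{Z}_N^{*}$. For a prime $r\in\{p,q\}$, let $D_0^{(r)}=\{g^{2t}\bmod r: 0\le t\le \frac{r-1}{2}-1\}$ and $D_1^{(r)}=\{g^{2t+1}\bmod r: 0\le t\le \frac{r-1}{2}-1\}$. For $j=0,1$ let $D_j^{(p)}q=\{yq\bmod N: y\in D_j^{(p)}\}$ and $D_j^{(q)}p=\{yp\bmod N: y\in D_j^{(q)}\}$. Define $C_0=\{0\}\cup D_0\cup D_0^{(p)}q\cup D_0^{(q)}p$ and $C_1=D_1\cup D_1^{(p)}q\cup D_1^{(q)}p$, so $\mathbb{Z}_N=C_0\cup C_1$ (disjoint). The sequence $s=\{s_i\}$ of period $N$ is defined by $s_i=0$ if $i\bmod N\in C_0$ and $s_i=1$ if $i\bmod N\in C_1$. For a binary sequence $s$ of period $N$, let $S(2)=\sum_{i=0}^{N-1}s_i2^{i}$; its 2-adic complexity is $\varphi_2(s)=\left\lfloor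 \log_2\!\left(\frac{2^{N}-1}{\gcd(2^{N}-1,S(2))}+1\right)\right\rfloor$. *)

theory Defs
  imports "HOL-Number_Theory.Number_Theory"
begin

definition wh_x :: "nat \<Rightarrow> nat \<Rightarrow> nat \<Rightarrow> nat" where
  "wh_x p q g = (THE x. x < p * q \<and> [x = g] (mod p) \<and> [x = 1] (mod q))"

definition wh_e :: "nat \<Rightarrow> nat \<Rightarrow> nat" where
  "wh_e p q = (p - 1) * (q - 1) div 2"

definition wh_D :: "nat \<Rightarrow> nat \<Rightarrow> nat \<Rightarrow> nat \<Rightarrow> nat set" where
  "wh_D p q g i = {(g ^ s * wh_x p q g ^ i) mod (p * q) | s. s < wh_e p q}"

definition cyc_D :: "nat \<Rightarrow> nat \<Rightarrow> nat \<Rightarrow> nat set" where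
  "cyc_D r g j = {g ^ (2 * t + j) mod r | t. t < (r - 1) div 2}"

definition wh_C0 :: "nat \<Rightarrow> nat \<Rightarrow> nat \<Rightarrow> nat set" where
  "wh_C0 p q g = {0} \<union> wh_D p q g 0
     \<union> {(y * q) mod (p * q) | y. y \<in> cyc_D p g 0}
     \<union> {(y * p) mod (p * q) | y. y \<in> cyc_D q g 0}"

definition wh_C1 :: "nat \<Rightarrow> nat \<Rightarrow> nat \<Rightarrow> nat set" where
  "wh_C1 p q g = wh_D p q g 1
     \<union> {(y * q) mod (p * q) | y. y \<in> cyc_D p g 1}
     \<union> {(y * p) mod (p * q) | y. y \<in> cyc_D q g 1}"

(* s_i = 0 if i mod N \<in> C_0, s_i = 1 if i mod N \<in> C_1 (C_0, C_1 partition Z_N) *)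
definition wh_seq :: "nat \<Rightarrow> nat \<Rightarrow> nat \<Rightarrow> nat \<Rightarrow> nat" where
  "wh_seq p q g i = (if i mod (p * q) \<in> wh_C1 p q g then 1 else 0)"

definition two_adic_complexity :: "(nat \<Rightarrow> nat) \<Rightarrow> nat \<Rightarrow> int" where
  "two_adic_complexity s N =
     (let S = (\<Sum>i<N. s i * 2 ^ i);
          M = (2::nat) ^ N - 1
      in \<lfloor>log 2 (real (M div gcd M S) + 1)\<rfloor>)"

end

theory Submission
  imports Defs
begin


lemma Leg_vals: "Legendre a p \<in> {-1,0,1}"
  by (simp add: Legendre_def)

lemma Leg_cong_eq:
  fixes x y p :: int
  assumes "p > 2" "[x = y] (mod p)" "x \<in> {-1,0,1}" "y \<in> {-1,0,1}"
  shows "x = y"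
proof -
  from assms(2) have "p dvd (y - x)" by (simp add: cong_iff_dvd_diff dvd_diff_commute)
  then obtain k where k: "y - x = p * k" by blast
  have b: "\<bar>y - x\<bar> \<le> 2" using assms(3,4) by auto
  have "k = 0"
  proof (rule ccontr)
    assume "k \<noteq> 0"
    hence "\<bar>k\<bar> \<ge> 1" by simp
    hence "\<bar>p\<bar> * 1 \<le> \<bar>p\<bar> * \<bar>k\<bar>" by (intro mult_left_mono) auto
    hence "\<bar>p * k\<bar> \<ge> \<bar>p\<bar>" by (simp add: abs_mult)
    thus False using b k assms(1) by simp
  qed
  thus ?thesis using k by simp
qed

lemma Leg_mult:
  assumes "prime p" "p > 2"
  shows "Legendre (a*b) (int p) = Legendre a (int p) * Legendre b (int p)"
proof -
  have e1: "[Legendre (a*b) (int p) = (a*b) ^ ((p - 1) div 2)] (mod p)"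
    using euler_criterion assms by blast
  have "[Legendre a (int p) * Legendre b (int p) = a ^ ((p - 1) div 2) * b ^ ((p - 1) div 2)] (mod p)"
    using euler_criterion[OF assms] cong_mult by blast
  hence e2: "[Legendre a (int p) * Legendre b (int p) = (a*b) ^ ((p - 1) div 2)] (mod p)"
    by (simp add: power_mult_distrib)
  have A: "[Legendre (a*b) (int p) = Legendre a (int p) * Legendre b (int p)] (mod p)"
    using e1 e2 cong_sym cong_trans by blast
  have P: "Legendre a (int p) * Legendre b (int p) \<in> {-1,0,1}"
    using Leg_vals[of a p] Leg_vals[of b p] by auto
  have p2: "int p > 2" using assms(2) by simp
  show ?thesis by (rule Leg_cong_eq[OF p2 A Leg_vals P])
qed

lemma Leg_cong:
  assumes "prime p" "p > 2" "[a = b] (mod int p)"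
  shows "Legendre a (int p) = Legendre b (int p)"
proof -
  have e1: "[Legendre a (int p) = a ^ ((p - 1) div 2)] (mod p)"
   and e2: "[Legendre b (int p) = b ^ ((p - 1) div 2)] (mod p)"
    using euler_criterion assms by blast+
  have "[a ^ ((p - 1) div 2) = b ^ ((p - 1) div 2)] (mod p)"
    using assms(3) cong_pow by blast
  hence A: "[Legendre a (int p) = Legendre b (int p)] (mod p)"
    using e1 e2 cong_sym cong_trans by meson
  have p2: "int p > 2" using assms(2) by simp
  show ?thesis by (rule Leg_cong_eq[OF p2 A Leg_vals Leg_vals])
qed

lemma Leg_zero: "Legendre a p = 0 \<longleftrightarrow> p dvd a"
  by (simp add: Legendre_def cong_0_iff)

lemma Leg_sq: "\<not> p dvd a \<Longrightarrow> Legendre a p * Legendre a p = 1"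
  by (simp add: Legendre_def cong_0_iff)

lemma Leg_minus1:
  assumes "prime p" "p > 2"
  shows "Legendre (-1) (int p) = (-1) ^ ((p - 1) div 2)"
proof -
  have A: "[Legendre (-1) (int p) = (-1) ^ ((p - 1) div 2)] (mod p)"
    using euler_criterion assms by blast
  have P: "((-1::int) ^ ((p - 1) div 2)) \<in> {-1,0,1}"
    by (cases "even ((p - 1) div 2)") auto
  have p2: "int p > 2" using assms(2) by simp
  show ?thesis by (rule Leg_cong_eq[OF p2 A Leg_vals P])
qed

lemma Leg_prim:
  assumes "prime p" "p > 2" "residue_primroot p g"
  shows "Legendre (int g) (int p) = -1"
proof -
  have cop: "coprime p g" and o: "ord p g = p - 1"
    using assms by (auto simp: residue_primroot_def totient_prime)
  have nd: "\<not> p dvd g" using cop assms(1)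
    by (metis coprime_absorb_left not_prime_unit)
  have E: "[Legendre (int g) (int p) = int g ^ ((p - 1) div 2)] (mod p)"
    using euler_criterion assms by blast
  have "Legendre (int g) (int p) \<noteq> 0" using nd by (simp add: Leg_zero)
  moreover have "Legendre (int g) (int p) \<noteq> 1"
  proof
    assume "Legendre (int g) (int p) = 1"
    hence "[int (g ^ ((p - 1) div 2)) = int 1] (mod int p)" using E
      by (simp add: cong_sym)
    hence "[g ^ ((p - 1) div 2) = 1] (mod p)" using cong_int_iff by blast
    hence dv: "p - 1 dvd (p - 1) div 2" using o ord_divides by metis
    have h1: "(p - 1) div 2 > 0" and h2: "(p - 1) div 2 < p - 1" using assms(2) by auto
    have "p - 1 \<le> (p - 1) div 2" by (rule dvd_imp_le[OF dv h1])
    thus False using h2 by linarith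
  qed
  ultimately show ?thesis using Leg_vals[of "int g" "int p"] by auto
qed

lemma Leg_prim_pow:
  assumes "prime p" "p > 2" "residue_primroot p g"
  shows "Legendre (int g ^ k) (int p) = (-1) ^ k"
proof (induction k)
  case 0
  have "\<not> [1 = 0] (mod int p)" using assms by (simp add: cong_0_iff)
  moreover have "QuadRes (int p) 1" unfolding QuadRes_def by (rule exI[of _ 1]) simp
  ultimately show ?case by (simp add: Legendre_def)
next
  case (Suc k) thus ?case using Leg_mult[OF assms(1,2)] Leg_prim[OF assms] by simp
qed




lemma pow_mod_period:
  fixes z :: int
  assumes "[z ^ r = 1] (mod d)"
  shows "[z ^ n = z ^ (n mod r)] (mod d)"
proof -
  have "z ^ n = z ^ (r * (n div r) + n mod r)" by (simp only: mult_div_mod_eq)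
  also have "\<dots> = (z ^ r) ^ (n div r) * z ^ (n mod r)" by (simp only: power_add power_mult)
  also have "[\<dots> = 1 ^ (n div r) * z ^ (n mod r)] (mod d)"
    using assms by (intro cong_mult cong_pow cong_refl)
  finally show ?thesis by simp
qed

lemma geo_zero:
  fixes z d :: int
  assumes "prime d" "prime r" "[z ^ r = 1] (mod d)" "\<not> [z = 1] (mod d)" "\<not> r dvd k"
  shows "[(\<Sum>a<r. z ^ (a * k)) = 0] (mod d)"
proof -
  have nk: "\<not> [z ^ k = 1] (mod d)"
  proof
    assume zk: "[z ^ k = 1] (mod d)"
    have cop: "coprime k r" using prime_imp_coprime[OF assms(2) assms(5)] by (simp add: ac_simps)
    have r1: "r \<noteq> 1" using assms(2) by auto
    obtain x y where xy: "k * x = r * y + 1"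
      using coprime_bezout_strong[OF cop r1] by blast
    have "[(z ^ k) ^ x = 1 ^ x] (mod d)" by (rule cong_pow[OF zk])
    hence A: "[z ^ (k * x) = 1] (mod d)" by (simp add: power_mult)
    moreover have B: "[z ^ (r * y + 1) = z] (mod d)"
    proof -
      have "z ^ (r * y + 1) = (z ^ r) ^ y * z" by (simp add: power_add power_mult)
      also have "[\<dots> = 1 ^ y * z] (mod d)" using assms(3) by (intro cong_mult cong_pow cong_refl)
      finally show ?thesis by simp
    qed
    from B have "[z = z ^ (k * x)] (mod d)" by (simp add: xy cong_sym)
    from cong_trans[OF this A] show False using assms(4) by simp
  qed
  have "(z ^ k) ^ r - 1 = (z ^ k - 1) * (\<Sum>a<r. (z ^ k) ^ a)" by (rule power_diff_1_eq)
  moreover have "[(z ^ k) ^ r = 1] (mod d)"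
  proof -
    have "(z ^ k) ^ r = (z ^ r) ^ k" by (simp add: power_mult[symmetric] mult.commute)
    moreover have "[(z ^ r) ^ k = 1 ^ k] (mod d)" by (rule cong_pow[OF assms(3)])
    ultimately show ?thesis by simp
  qed
  ultimately have "d dvd (z ^ k - 1) * (\<Sum>a<r. (z ^ k) ^ a)"
    by (simp add: cong_iff_dvd_diff)
  moreover have "\<not> d dvd (z ^ k - 1)" using nk by (simp add: cong_iff_dvd_diff)
  ultimately have "d dvd (\<Sum>a<r. (z ^ k) ^ a)" using assms(1) prime_dvd_multD by blast
  moreover have "(\<Sum>a<r. z ^ (a * k)) = (\<Sum>a<r. (z ^ k) ^ a)"
    by (intro sum.cong refl) (simp add: power_mult[symmetric] mult.commute)
  ultimately show ?thesis by (simp add: cong_0_iff)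
qed

lemma bij_mult_mod:
  assumes "coprime c r" "r > 0"
  shows "bij_betw (\<lambda>a. (c * a) mod r) {..<r} {..<(r::nat)}"
proof -
  have inj: "inj_on (\<lambda>a. (c * a) mod r) {..<r}"
  proof (rule inj_onI)
    fix a b assume "a \<in> {..<r}" "b \<in> {..<r}" "(c * a) mod r = (c * b) mod r"
    hence "[c * a = c * b] (mod r)" "a < r" "b < r" by (auto simp: cong_def)
    hence "[a = b] (mod r)" using cong_mult_lcancel_nat assms(1) by blast
    thus "a = b" using \<open>a < r\<close> \<open>b < r\<close> by (simp add: cong_def)
  qed
  have sub: "(\<lambda>a. (c * a) mod r) ` {..<r} \<subseteq> {..<r}" using assms(2) by auto
  have cd: "card ((\<lambda>a. (c * a) mod r) ` {..<r}) = card {..<r}" using card_image[OF inj] by simp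
  have "(\<lambda>a. (c * a) mod r) ` {..<r} = {..<r}" by (rule card_subset_eq[OF finite_lessThan sub cd])
  thus ?thesis using inj by (simp add: bij_betw_def)
qed

definition chi :: "nat \<Rightarrow> nat \<Rightarrow> int" where
  "chi r a = Legendre (int a) (int r)"

lemma chi_sum_zero:
  assumes "prime r" "r > 2" "chi r n0 = -1"
  shows "(\<Sum>c<r. chi r c) = 0"
proof -
  have nd: "\<not> r dvd n0" using assms(3) Leg_zero[of "int n0" "int r"] by (auto simp: chi_def)
  have cop: "coprime n0 r" using prime_imp_coprime[OF assms(1) nd] by (simp add: ac_simps)
  have "(\<Sum>c<r. chi r c) = (\<Sum>c<r. chi r ((n0 * c) mod r))"
    using sum.reindex_bij_betw[OF bij_mult_mod[OF cop], of "chi r"] assms(1)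
    by (simp add: prime_gt_0_nat)
  also have "\<dots> = (\<Sum>c<r. chi r n0 * chi r c)"
  proof (rule sum.cong)
    fix c assume "c \<in> {..<r}"
    have "chi r ((n0 * c) mod r) = chi r (n0 * c)"
      unfolding chi_def using assms(1,2) by (intro Leg_cong) (auto simp: cong_def zmod_int of_nat_mult)
    also have "\<dots> = chi r n0 * chi r c" unfolding chi_def using Leg_mult[OF assms(1,2)] by simp
    finally show "chi r ((n0 * c) mod r) = chi r n0 * chi r c" .
  qed simp
  also have "\<dots> = - (\<Sum>c<r. chi r c)" using assms(3) by (simp add: sum_negf)
  finally show ?thesis by simp
qed

lemma chi_zero[simp]: "chi r 0 = 0"
  by (simp add: chi_def Legendre_def)

lemma gauss_sq:
  fixes z d :: int
  assumes d: "prime d" and r: "prime r" "r > 2" and zr: "[z ^ r = 1] (mod d)"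
    and z1: "\<not> [z = 1] (mod d)" and n0: "chi r n0 = -1"
  shows "[(\<Sum>a<r. chi r a * z ^ a) ^ 2 = chi r (r - 1) * int r] (mod d)"
proof -
  have r0: "r > 0" using r by simp
  have step: "[(\<Sum>b<r. chi r a * z ^ a * (chi r b * z ^ b)) = (\<Sum>c<r. chi r c * z ^ (a * (1 + c)))] (mod d)"
    if a: "a < r" for a
  proof (cases "a = 0")
    case True
    thus ?thesis using chi_sum_zero[OF r n0] by simp
  next
    case False
    have nd: "\<not> r dvd a" using a False by (auto dest: dvd_imp_le)
    have cop: "coprime a r" using prime_imp_coprime[OF r(1) nd] by (simp add: ac_simps)
    have "(\<Sum>b<r. chi r a * z ^ a * (chi r b * z ^ b)) =
          (\<Sum>c<r. chi r a * z ^ a * (chi r ((a * c) mod r) * z ^ ((a * c) mod r)))"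
      using sum.reindex_bij_betw[OF bij_mult_mod[OF cop r0],
          of "\<lambda>b. chi r a * z ^ a * (chi r b * z ^ b)"] by simp
    also have "[\<dots> = (\<Sum>c<r. chi r c * z ^ (a * (1 + c)))] (mod d)"
    proof (rule cong_sum)
      fix c assume "c \<in> {..<r}"
      have "chi r ((a * c) mod r) = chi r (a * c)"
        unfolding chi_def using r by (intro Leg_cong) (auto simp: cong_def zmod_int of_nat_mult)
      also have "\<dots> = chi r a * chi r c" unfolding chi_def using Leg_mult[OF r] by simp
      finally have e1: "chi r ((a * c) mod r) = chi r a * chi r c" .
      have aa: "chi r a * chi r a = 1"
        unfolding chi_def using Leg_sq[of "int r" "int a"] nd by simp
      have "[z ^ a * z ^ ((a * c) mod r) = z ^ ((a + (a * c) mod r) mod r)] (mod d)"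
        using pow_mod_period[OF zr, of "a + (a * c) mod r"] by (simp add: power_add)
      also have "(a + (a * c) mod r) mod r = (a * (1 + c)) mod r"
        by (simp add: mod_add_right_eq algebra_simps)
      also have "[z ^ ((a * (1 + c)) mod r) = z ^ (a * (1 + c))] (mod d)"
        using pow_mod_period[OF zr, of "a * (1 + c)"] by (simp add: cong_sym)
      finally have e2: "[z ^ a * z ^ ((a * c) mod r) = z ^ (a * (1 + c))] (mod d)" .
      have "chi r a * z ^ a * (chi r ((a * c) mod r) * z ^ ((a * c) mod r)) =
            (chi r a * chi r a) * chi r c * (z ^ a * z ^ ((a * c) mod r))"
        by (simp add: e1 algebra_simps)
      also have "\<dots> = chi r c * (z ^ a * z ^ ((a * c) mod r))" using aa by simp
      also have "[\<dots> = chi r c * z ^ (a * (1 + c))] (mod d)"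
        using e2 by (intro cong_mult cong_refl)
      finally show "[chi r a * z ^ a * (chi r ((a * c) mod r) * z ^ ((a * c) mod r)) =
                     chi r c * z ^ (a * (1 + c))] (mod d)" .
    qed
    finally show ?thesis .
  qed
  have "(\<Sum>a<r. chi r a * z ^ a) ^ 2 = (\<Sum>a<r. \<Sum>b<r. chi r a * z ^ a * (chi r b * z ^ b))"
    by (simp add: power2_eq_square sum_product)
  also have "[\<dots> = (\<Sum>a<r. \<Sum>c<r. chi r c * z ^ (a * (1 + c)))] (mod d)"
    by (rule cong_sum, rule step) simp
  also have "(\<Sum>a<r. \<Sum>c<r. chi r c * z ^ (a * (1 + c))) =
             (\<Sum>c<r. chi r c * (\<Sum>a<r. z ^ (a * (1 + c))))"
    by (subst sum.swap) (simp add: sum_distrib_left)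
  also have "(\<Sum>c<r. chi r c * (\<Sum>a<r. z ^ (a * (1 + c)))) =
     chi r (r - 1) * (\<Sum>a<r. z ^ (a * r)) +
     (\<Sum>c<r - 1. chi r c * (\<Sum>a<r. z ^ (a * (1 + c))))"
  proof -
    obtain r' where r': "r = Suc r'" using r0 by (cases r) auto
    show ?thesis unfolding r' by (simp add: sum.lessThan_Suc)
  qed
  also have "[\<dots> = chi r (r - 1) * int r + 0] (mod d)"
  proof (intro cong_add cong_mult cong_refl)
    have "[(\<Sum>a<r. z ^ (a * r)) = (\<Sum>a<r. 1)] (mod d)"
    proof (rule cong_sum)
      fix a assume "a \<in> {..<r}"
      have "z ^ (a * r) = (z ^ r) ^ a" by (simp add: power_mult[symmetric] mult.commute)
      also have "[\<dots> = 1 ^ a] (mod d)" using zr by (intro cong_pow)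
      finally show "[z ^ (a * r) = 1] (mod d)" by simp
    qed
    thus "[(\<Sum>a<r. z ^ (a * r)) = int r] (mod d)" by simp
    have "[(\<Sum>c<r - 1. chi r c * (\<Sum>a<r. z ^ (a * (1 + c)))) = (\<Sum>c<r - 1. chi r c * 0)] (mod d)"
    proof (rule cong_sum)
      fix c assume c: "c \<in> {..<r - 1}"
      have "\<not> r dvd (1 + c)" using c by (auto dest: dvd_imp_le)
      thus "[chi r c * (\<Sum>a<r. z ^ (a * (1 + c))) = chi r c * 0] (mod d)"
        using geo_zero[OF d r(1) zr z1, of "1 + c"] by (intro cong_mult cong_refl) auto
    qed
    thus "[(\<Sum>c<r - 1. chi r c * (\<Sum>a<r. z ^ (a * (1 + c)))) = 0] (mod d)" by simp
  qed
  finally show ?thesis by simp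
qed




lemma pow_mod_period_nat:
  fixes z :: nat
  assumes "[z ^ r = 1] (mod d)"
  shows "[z ^ n = z ^ (n mod r)] (mod d)"
proof -
  have "z ^ n = z ^ (r * (n div r) + n mod r)" by (simp only: mult_div_mod_eq)
  also have "\<dots> = (z ^ r) ^ (n div r) * z ^ (n mod r)" by (simp only: power_add power_mult)
  also have "[\<dots> = 1 ^ (n div r) * z ^ (n mod r)] (mod d)"
    using assms by (intro cong_mult cong_pow cong_refl)
  finally show ?thesis by simp
qed

lemma chi_mod: "prime r \<Longrightarrow> r > 2 \<Longrightarrow> chi r (a mod r) = chi r a"
  unfolding chi_def by (intro Leg_cong) (auto simp: cong_def zmod_int)

lemma chi_cong: "prime r \<Longrightarrow> r > 2 \<Longrightarrow> [a = b] (mod r) \<Longrightarrow> chi r a = chi r b"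
proof -
  assume r: "prime r" "r > 2" and c: "[a = b] (mod r)"
  have "chi r a = chi r (a mod r)" using chi_mod[OF r] by simp
  also have "a mod r = b mod r" using c by (simp add: cong_def)
  also have "chi r (b mod r) = chi r b" using chi_mod[OF r] by simp
  finally show ?thesis .
qed

lemma chi_mult: "prime r \<Longrightarrow> r > 2 \<Longrightarrow> chi r (a * b) = chi r a * chi r b"
  unfolding chi_def using Leg_mult by simp

lemma chi_zero_iff: "chi r a = 0 \<longleftrightarrow> r dvd a"
  unfolding chi_def using Leg_zero[of "int a" "int r"] by simp

lemma chi_vals: "chi r a \<in> {-1,0,1}"
  unfolding chi_def using Leg_vals by simp

lemma chi_sq: "\<not> r dvd a \<Longrightarrow> chi r a * chi r a = 1"
  unfolding chi_def using Leg_sq[of "int r" "int a"] by simp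

lemma chi_prim_pow: "prime r \<Longrightarrow> r > 2 \<Longrightarrow> residue_primroot r g \<Longrightarrow> chi r (g ^ k) = (-1) ^ k"
  unfolding chi_def using Leg_prim_pow by simp

lemma chi_one: "prime r \<Longrightarrow> r > 2 \<Longrightarrow> chi r 1 = 1"
proof -
  assume r: "prime r" "r > 2"
  have "\<not> r dvd 1" using r by auto
  hence "chi r 1 * chi r 1 = 1" by (rule chi_sq)
  moreover have "chi r 1 = chi r 1 * chi r 1" using chi_mult[OF r, of 1 1] by simp
  ultimately show ?thesis by simp
qed

lemma prim_gen:
  assumes "prime r" "residue_primroot r g" "\<not> r dvd y"
  shows "\<exists>k < r - 1. g ^ k mod r = y mod r"
proof -
  have r1: "r > 1" using assms(1) prime_gt_1_nat by blast
  have c: "coprime y r" using assms(1,3) by (metis coprime_commute prime_imp_coprime)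
  have "y mod r > 0" using assms(3) by (simp add: mod_greater_zero_iff_not_dvd)
  moreover have "y mod r \<le> r" using r1 by (simp add: order.strict_implies_order)
  moreover have "coprime (y mod r) r" using c r1 by (simp add: coprime_mod_left_iff)
  ultimately have "y mod r \<in> totatives r" by (simp add: totatives_def)
  then obtain k where "k < totient r" "g ^ k mod r = y mod r"
  proof -
    have "y mod r \<in> (\<lambda>i. g ^ i mod r) ` {..<totient r}"
      using residue_primroot_is_generator[OF r1 assms(2)] \<open>y mod r \<in> totatives r\<close>
      by (simp add: bij_betw_def)
    thus ?thesis using that by auto
  qed
  thus ?thesis using totient_prime[OF assms(1)] by auto
qed

lemma cycD1_iff:
  assumes "prime r" "r > 2" "residue_primroot r g"
  shows "y \<in> cyc_D r g 1 \<longleftrightarrow> y < r \<and> chi r y = -1"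
proof
  assume "y \<in> cyc_D r g 1"
  then obtain t where y: "y = g ^ (2 * t + 1) mod r" by (auto simp: cyc_D_def)
  have "y < r" using y assms(1) prime_gt_0_nat by auto
  moreover have "chi r y = -1" unfolding y chi_mod[OF assms(1,2)] chi_prim_pow[OF assms] by simp
  ultimately show "y < r \<and> chi r y = -1" by simp
next
  assume h: "y < r \<and> chi r y = -1"
  hence "\<not> r dvd y" using chi_zero_iff by force
  then obtain k where k: "k < r - 1" "g ^ k mod r = y mod r" using prim_gen assms by blast
  have "chi r y = chi r (y mod r)" using chi_mod[OF assms(1,2)] by simp
  also have "\<dots> = chi r (g ^ k mod r)" using k(2) by simp
  also have "\<dots> = (-1) ^ k" using chi_mod[OF assms(1,2)] chi_prim_pow[OF assms] by simp
  finally have "chi r y = (-1) ^ k" .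
  hence "odd k" using h by auto
  then obtain t where t: "k = 2 * t + 1" by (metis oddE)
  have "t < (r - 1) div 2" using k(1) t by auto
  moreover have "y = g ^ (2 * t + 1) mod r" using k(2) t h by simp
  ultimately show "y \<in> cyc_D r g 1" by (auto simp: cyc_D_def)
qed

lemma part_char:
  assumes "prime r" "r > 2" "residue_primroot r g" "M = r * m" "u < M"
  shows "u \<in> {(y * m) mod M | y. y \<in> cyc_D r g 1} \<longleftrightarrow> m dvd u \<and> chi r (u div m) = -1"
proof
  assume "u \<in> {(y * m) mod M | y. y \<in> cyc_D r g 1}"
  then obtain y where y: "u = (y * m) mod M" "y < r" "chi r y = -1"
    using cycD1_iff[OF assms(1-3)] by auto
  have m0: "m > 0" using assms(4,5) by (cases m) auto
  have "y * m < M" using y(2) assms(4) m0 by simp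
  hence u: "u = y * m" using y(1) by simp
  show "m dvd u \<and> chi r (u div m) = -1" using u y m0 by simp
next
  assume h: "m dvd u \<and> chi r (u div m) = -1"
  define y where "y = u div m"
  have u: "u = y * m" using h by (simp add: y_def)
  have m0: "m > 0" using assms(4,5) by (cases m) auto
  have "y < r" using assms(4,5) u m0 by simp
  moreover have "chi r y = -1" using h u m0 by simp
  ultimately have "y \<in> cyc_D r g 1" using cycD1_iff[OF assms(1-3)] by simp
  moreover have "u = (y * m) mod M" using u assms(5) by simp
  ultimately show "u \<in> {(y * m) mod M | y. y \<in> cyc_D r g 1}" by blast
qed




lemma AR1: fixes P b n :: nat assumes "even P" "P > 0" "even n"
  shows "(b + (P + 2) * ((n mod P) div 2)) mod P = (b + n) mod P"
proof -
  have "even (n mod P)" using assms by (simp add: dvd_mod)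
  hence h: "2 * ((n mod P) div 2) = n mod P" by simp
  have "b + (P + 2) * ((n mod P) div 2) = (b + n mod P) + P * ((n mod P) div 2)"
    using h by (simp add: algebra_simps)
  also have "\<dots> mod P = (b + n mod P) mod P" by simp
  also have "\<dots> = (b + n) mod P" by (simp add: mod_add_right_eq)
  finally show ?thesis .
qed

locale whl =
  fixes p q g :: nat
  assumes pp: "prime p" and pq: "prime q" and p4: "p mod 4 = 1" and q4: "q mod 4 = 3"
    and qp: "q = p + 2" and gp: "residue_primroot p g" and gq: "residue_primroot q g"
begin

lemma p2: "p > 2"
proof -
  have "p \<ge> 2" using pp prime_ge_2_nat by blast
  moreover have "p \<noteq> 2" using p4 by auto
  ultimately show ?thesis by simp
qed

lemma p_odd: "odd p" using prime_odd_nat[OF pp p2] .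

lemma q2: "q > 2" using p2 qp by simp

lemma pq_ne: "p \<noteq> q" using qp by simp

lemma cop_pq: "coprime p q"
  using pp pq pq_ne by (simp add: primes_coprime)

lemma x_props: "[wh_x p q g = g] (mod p)" "[wh_x p q g = 1] (mod q)" "wh_x p q g < p * q"
proof -
  have "\<exists>!x. x < p * q \<and> [x = g] (mod p) \<and> [x = 1] (mod q)"
    by (rule binary_chinese_remainder_unique_nat) (use cop_pq p2 q2 in auto)
  hence "wh_x p q g < p * q \<and> [wh_x p q g = g] (mod p) \<and> [wh_x p q g = 1] (mod q)"
    unfolding wh_x_def by (rule theI')
  thus "[wh_x p q g = g] (mod p)" "[wh_x p q g = 1] (mod q)" "wh_x p q g < p * q" by auto
qed

lemma gp_fermat: "[g ^ (p - 1) = 1] (mod p)"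
proof -
  have "coprime p g" using gp by (simp add: residue_primroot_def)
  hence "\<not> p dvd g" using pp by (metis coprime_absorb_left not_prime_unit)
  thus ?thesis using fermat_theorem pp by blast
qed

lemma gq_fermat: "[g ^ (q - 1) = 1] (mod q)"
proof -
  have "coprime q g" using gq by (simp add: residue_primroot_def)
  hence "\<not> q dvd g" using pq by (metis coprime_absorb_left not_prime_unit)
  thus ?thesis using fermat_theorem pq by blast
qed

lemma e_dvd: "p - 1 dvd wh_e p q" "q - 1 dvd wh_e p q" "wh_e p q > 0"
proof -
  define P where "P = p - 1"
  have eP: "even P" using p_odd p2 unfolding P_def by (auto elim!: oddE)
  have qP: "q - 1 = P + 2" using qp P_def p2 by simp
  have e: "wh_e p q = P * (P + 2) div 2" unfolding wh_e_def P_def[symmetric] qP by simp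
  obtain h where h: "P = 2 * h" using eP by blast
  have e1: "wh_e p q = P * (h + 1)" using e h by (simp add: algebra_simps)
  have e2: "wh_e p q = h * (P + 2)" using e h by (simp add: algebra_simps)
  show "p - 1 dvd wh_e p q" using e1 P_def by simp
  show "q - 1 dvd wh_e p q" unfolding e2 qP by (rule dvd_triv_right)
  show "wh_e p q > 0" using e1 P_def p2 by simp
qed

lemma D1_char:
  assumes u: "u < p * q"
  shows "u \<in> wh_D p q g 1 \<longleftrightarrow> chi p u * chi q u = -1"
proof
  assume "u \<in> wh_D p q g 1"
  then obtain s where s: "u = (g ^ s * wh_x p q g) mod (p * q)" by (auto simp: wh_D_def)
  have cp: "[u = g ^ s * wh_x p q g] (mod p)" unfolding s cong_def by (simp add: mod_mod_cancel)
  have cq: "[u = g ^ s * wh_x p q g] (mod q)" unfolding s cong_def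
    by (simp add: mod_mod_cancel)
  have "chi p u = chi p (g ^ s) * chi p (wh_x p q g)"
    using chi_cong[OF pp p2 cp] chi_mult[OF pp p2] by simp
  also have "chi p (wh_x p q g) = chi p g" using chi_cong[OF pp p2 x_props(1)] .
  also have "chi p g = -1" using chi_prim_pow[OF pp p2 gp, of 1] by simp
  finally have A: "chi p u = - ((-1) ^ s)" using chi_prim_pow[OF pp p2 gp] by simp
  have "chi q u = chi q (g ^ s) * chi q (wh_x p q g)"
    using chi_cong[OF pq q2 cq] chi_mult[OF pq q2] by simp
  also have "chi q (wh_x p q g) = chi q 1" using chi_cong[OF pq q2 x_props(2)] .
  finally have B: "chi q u = (-1) ^ s" using chi_prim_pow[OF pq q2 gq] chi_one[OF pq q2] by simp
  have "((-1::int) ^ s) * ((-1) ^ s) = 1" by (simp add: power_add[symmetric] minus_one_power_iff)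
  thus "chi p u * chi q u = -1" using A B by simp
next
  assume h: "chi p u * chi q u = -1"
  have np: "\<not> p dvd u" using h chi_zero_iff[of p u] by auto
  have nq: "\<not> q dvd u" using h chi_zero_iff[of q u] by auto
  obtain a where a: "a < p - 1" "g ^ a mod p = u mod p" using prim_gen[OF pp gp np] by blast
  obtain b where b: "b < q - 1" "g ^ b mod q = u mod q" using prim_gen[OF pq gq nq] by blast
  have ca: "chi p u = (-1) ^ a"
  proof -
    have "chi p u = chi p (u mod p)" using chi_mod[OF pp p2] by simp
    also have "\<dots> = chi p (g ^ a mod p)" using a(2) by simp
    also have "\<dots> = (-1) ^ a" using chi_mod[OF pp p2] chi_prim_pow[OF pp p2 gp] by simp
    finally show ?thesis .
  qed
  have cb: "chi q u = (-1) ^ b"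
  proof -
    have "chi q u = chi q (u mod q)" using chi_mod[OF pq q2] by simp
    also have "\<dots> = chi q (g ^ b mod q)" using b(2) by simp
    also have "\<dots> = (-1) ^ b" using chi_mod[OF pq q2] chi_prim_pow[OF pq q2 gq] by simp
    finally show ?thesis .
  qed
  have "(-1::int) ^ (a + b) = -1" using h ca cb by (simp add: power_add)
  hence oab: "odd (a + b)"
  proof (rule contrapos_pp)
    assume "\<not> odd (a + b)"
    hence "even (a + b)" by simp
    thus "(-1::int) ^ (a + b) \<noteq> -1" by simp
  qed
  define P where "P = p - 1"
  have eP: "even P" using p_odd p2 unfolding P_def by (auto elim!: oddE)
  have P0: "P > 0" using p2 P_def by simp
  have qP: "q - 1 = P + 2" using qp P_def p2 by simp
  have op: "odd (p - 2)" using p_odd p2 by (auto elim!: oddE)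
  define n where "n = a + (p - 2) * (1 + b)"
  have en: "even n" using oab op unfolding n_def by auto
  define k where "k = (n mod P) div 2"
  define s0 where "s0 = b + (P + 2) * k"
  define s where "s = s0 mod wh_e p q"
  have s0P: "s0 mod P = (b + n) mod P" unfolding s0_def k_def by (rule AR1[OF eP P0 en])
  have bn: "b + n + 1 = a + P * (b + 1)"
  proof -
    define t where "t = p - 2"
    have Pt: "P = t + 1" unfolding t_def P_def using p2 by simp
    have "n = a + t * (1 + b)" unfolding n_def t_def ..
    thus ?thesis unfolding Pt by (simp add: algebra_simps)
  qed
  have s0P': "(s0 mod P + 1) mod P = a"
  proof -
    have "(s0 mod P + 1) mod P = ((b + n) mod P + 1) mod P" using s0P by simp
    also have "\<dots> = (b + n + 1) mod P" by (rule mod_add_left_eq)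
    also have "\<dots> = a mod P" unfolding bn by (rule mod_mult_self2)
    also have "\<dots> = a" using a(1) P_def by simp
    finally show ?thesis .
  qed
  have Pe: "P dvd wh_e p q" using e_dvd(1) P_def by simp
  have Qe: "P + 2 dvd wh_e p q" using e_dvd(2) qP by simp
  have sP: "s mod P = s0 mod P" unfolding s_def using Pe by (simp add: mod_mod_cancel)
  have sQ: "s mod (P + 2) = b"
  proof -
    have "s mod (P + 2) = s0 mod (P + 2)" unfolding s_def using Qe by (simp add: mod_mod_cancel)
    also have "\<dots> = b mod (P + 2)" unfolding s0_def by (rule mod_mult_self2)
    also have "\<dots> = b" using b(1) qP by simp
    finally show ?thesis .
  qed
  define X where "X = wh_x p q g"
  have gfp: "[g ^ P = 1] (mod p)" using gp_fermat P_def by simp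
  have gfq: "[g ^ (P + 2) = 1] (mod q)" using gq_fermat qP by simp
  have Cp: "[g ^ s * X = u] (mod p)"
  proof -
    have "[g ^ s * X = g ^ (s mod P) * g] (mod p)"
      using pow_mod_period_nat[OF gfp, of s] x_props(1) unfolding X_def by (rule cong_mult)
    also have "g ^ (s mod P) * g = g ^ (s mod P + 1)" by simp
    also have "[\<dots> = g ^ ((s mod P + 1) mod P)] (mod p)" by (rule pow_mod_period_nat[OF gfp])
    also have "(s mod P + 1) mod P = a" using s0P' sP by simp
    also have "[g ^ a = u] (mod p)" using a(2) by (simp add: cong_def)
    finally show ?thesis .
  qed
  have Cq: "[g ^ s * X = u] (mod q)"
  proof -
    have "[g ^ s * X = g ^ (s mod (P + 2)) * 1] (mod q)"
      using pow_mod_period_nat[OF gfq, of s] x_props(2) unfolding X_def by (rule cong_mult)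
    also have "g ^ (s mod (P + 2)) * 1 = g ^ b" using sQ by simp
    also have "[g ^ b = u] (mod q)" using b(2) by (simp add: cong_def)
    finally show ?thesis .
  qed
  have "[g ^ s * X = u] (mod p * q)" by (rule coprime_cong_mult_nat[OF Cp Cq cop_pq])
  hence U: "u = (g ^ s * X ^ 1) mod (p * q)" using u by (simp add: cong_def)
  have "s < wh_e p q" unfolding s_def using e_dvd(3) by simp
  thus "u \<in> wh_D p q g 1" unfolding wh_D_def X_def[symmetric] using U by blast
qed


lemma C1_char:
  assumes u: "u < p * q"
  shows "u \<in> wh_C1 p q g \<longleftrightarrow> chi p u * chi q u = -1 \<or> (q dvd u \<and> chi p (u div q) = -1)
            \<or> (p dvd u \<and> chi q (u div p) = -1)"
proof -
  have A: "u \<in> {(y * q) mod (p * q) | y. y \<in> cyc_D p g 1} \<longleftrightarrow> q dvd u \<and> chi p (u div q) = -1"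
    by (rule part_char[OF pp p2 gp refl u])
  have B: "u \<in> {(y * p) mod (p * q) | y. y \<in> cyc_D q g 1} \<longleftrightarrow> p dvd u \<and> chi q (u div p) = -1"
    by (rule part_char[OF pq q2 gq _ u]) (simp add: mult.commute)
  show ?thesis unfolding wh_C1_def using D1_char[OF u] A B by blast
qed

lemma chi_pm1: "\<not> r dvd a \<Longrightarrow> chi r a = 1 \<or> chi r a = -1"
  using chi_vals[of r a] chi_zero_iff[of r a] by auto

lemma seq_val:
  assumes u: "u < p * q"
  shows "2 * int (wh_seq p q g u) = (if u = 0 then 0 else 1) - chi p u * chi q u
     - chi p q * chi p u * (if q dvd u then 1 else 0) - chi q p * chi q u * (if p dvd u then 1 else 0)"
proof -
  have ws: "wh_seq p q g u = (if u \<in> wh_C1 p q g then 1 else 0)" unfolding wh_seq_def using u by simp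
  have both: "\<not> (p dvd u \<and> q dvd u)" if "u \<noteq> 0"
  proof
    assume "p dvd u \<and> q dvd u"
    hence "p * q dvd u" using divides_mult cop_pq by blast
    hence "p * q \<le> u" using that by (simp add: dvd_imp_le)
    thus False using u by simp
  qed
  have npq: "\<not> p dvd q" using pp pq pq_ne by (metis prime_nat_iff p2 not_less_iff_gr_or_eq less_trans one_less_numeral_iff semiring_norm(76))
  have nqp: "\<not> q dvd p" using pp pq pq_ne by (metis prime_nat_iff q2 not_less_iff_gr_or_eq less_trans one_less_numeral_iff semiring_norm(76))
  show ?thesis
  proof (cases "u = 0")
    case True
    thus ?thesis using ws C1_char[OF u] by simp
  next
    case u0: False
    show ?thesis
    proof (cases "q dvd u")
      case qd: True
      hence pnd: "\<not> p dvd u" using both u0 by blast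
      define y where "y = u div q"
      have uy: "u = q * y" using qd by (simp add: y_def)
      have pny: "\<not> p dvd y" using pnd uy by auto
      have cqu: "chi q u = 0" using qd chi_zero_iff by blast
      have cpu: "chi p u = chi p q * chi p y" using uy chi_mult[OF pp p2] by simp
      have sq: "chi p q * chi p q = 1" using chi_sq[OF npq] .
      have R: "chi p q * chi p u = chi p y" using cpu sq by (metis mult.assoc mult_1)
      have C: "u \<in> wh_C1 p q g \<longleftrightarrow> chi p y = -1" using C1_char[OF u] qd pnd cqu y_def by simp
      show ?thesis using chi_pm1[OF pny] ws C R u0 qd pnd cqu by auto
    next
      case qnd: False
      show ?thesis
      proof (cases "p dvd u")
        case pd: True
        define y where "y = u div p"
        have uy: "u = p * y" using pd by (simp add: y_def)
        have qny: "\<not> q dvd y" using qnd uy by auto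
        have cpu: "chi p u = 0" using pd chi_zero_iff by blast
        have cqu: "chi q u = chi q p * chi q y" using uy chi_mult[OF pq q2] by simp
        have sq: "chi q p * chi q p = 1" using chi_sq[OF nqp] .
        have R: "chi q p * chi q u = chi q y" using cqu sq by (metis mult.assoc mult_1)
        have C: "u \<in> wh_C1 p q g \<longleftrightarrow> chi q y = -1" using C1_char[OF u] qnd pd cpu y_def by simp
        show ?thesis using chi_pm1[OF qny] ws C R u0 qnd pd cpu by auto
      next
        case pnd: False
        have C: "u \<in> wh_C1 p q g \<longleftrightarrow> chi p u * chi q u = -1" using C1_char[OF u] qnd pnd by simp
        show ?thesis using chi_pm1[OF pnd] chi_pm1[OF qnd] ws C u0 qnd pnd by auto
      qed
    qed
  qed
qed

end




lemma sum_dvd_idx: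
  fixes f :: "nat \<Rightarrow> int"
  assumes m: "m > 0"
  shows "(\<Sum>u<m * n. (if m dvd u then f u else 0)) = (\<Sum>y<n. f (m * y))"
proof -
  have E: "{u \<in> {..<m * n}. m dvd u} = (\<lambda>y. m * y) ` {..<n}"
  proof
    show "{u \<in> {..<m * n}. m dvd u} \<subseteq> (\<lambda>y. m * y) ` {..<n}"
    proof
      fix u assume "u \<in> {u \<in> {..<m * n}. m dvd u}"
      then obtain k where k: "u = m * k" "m * k < m * n" by auto
      hence "k < n" using m by simp
      thus "u \<in> (\<lambda>y. m * y) ` {..<n}" using k by auto
    qed
    show "(\<lambda>y. m * y) ` {..<n} \<subseteq> {u \<in> {..<m * n}. m dvd u}" using m by auto
  qed
  have inj: "inj_on (\<lambda>y. m * y) {..<n}" using m by (auto simp: inj_on_def)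
  have "(\<Sum>u<m * n. (if m dvd u then f u else 0)) = (\<Sum>u\<in>{u \<in> {..<m * n}. m dvd u}. f u)"
    by (rule sum.inter_filter[symmetric]) simp
  also have "\<dots> = (\<Sum>y<n. f (m * y))" unfolding E by (simp add: sum.reindex[OF inj])
  finally show ?thesis .
qed

lemma bij_crt:
  fixes p q :: nat
  assumes c: "coprime p q" and p0: "p > 0" and q0: "q > 0"
  shows "bij_betw (\<lambda>(a, b). (q * a + p * b) mod (p * q)) ({..<p} \<times> {..<q}) {..<p * q}"
proof -
  let ?h = "\<lambda>(a, b). (q * a + p * b) mod (p * q)"
  have inj: "inj_on ?h ({..<p} \<times> {..<q})"
  proof (rule inj_onI, clarify)
    fix a b a' b'
    assume a: "a < p" "a' < p" and b: "b < q" "b' < q"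
      and e: "(q * a + p * b) mod (p * q) = (q * a' + p * b') mod (p * q)"
    have E: "[q * a + p * b = q * a' + p * b'] (mod p * q)" using e by (simp add: cong_def)
    have "[q * a + p * b = q * a' + p * b'] (mod p)" using cong_modulus_mult_nat[OF E] .
    moreover have "[q * a + p * b = q * a] (mod p)" by (simp add: cong_def)
    moreover have "[q * a' + p * b' = q * a'] (mod p)" by (simp add: cong_def)
    ultimately have "[q * a = q * a'] (mod p)" by (meson cong_sym cong_trans)
    hence "[a = a'] (mod p)" using cong_mult_lcancel_nat c by (simp add: coprime_commute)
    hence aa: "a = a'" using a by (simp add: cong_def)
    have E2: "[q * a + p * b = q * a' + p * b'] (mod q * p)" using E by (simp add: mult.commute)
    have "[q * a + p * b = q * a' + p * b'] (mod q)" using cong_modulus_mult_nat[OF E2] .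
    moreover have "[q * a + p * b = p * b] (mod q)" by (simp add: cong_def)
    moreover have "[q * a' + p * b' = p * b'] (mod q)" by (simp add: cong_def)
    ultimately have "[p * b = p * b'] (mod q)" by (meson cong_sym cong_trans)
    hence "[b = b'] (mod q)" using cong_mult_lcancel_nat c by simp
    hence "b = b'" using b by (simp add: cong_def)
    thus "a = a' \<and> b = b'" using aa by simp
  qed
  have sub: "?h ` ({..<p} \<times> {..<q}) \<subseteq> {..<p * q}" using p0 q0 by auto
  have cd: "card (?h ` ({..<p} \<times> {..<q})) = card {..<p * q}"
    using card_image[OF inj] by (simp add: card_cartesian_product)
  have "?h ` ({..<p} \<times> {..<q}) = {..<p * q}" by (rule card_subset_eq[OF finite_lessThan sub cd])
  thus ?thesis using inj by (simp add: bij_betw_def)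
qed

lemma ac4: "(x1::int) * x2 * (x3 * x4) * x5 = x1 * x3 * (x2 * x4) * x5"
  by (simp add: mult_ac)

lemma ac5: "(x1::int) * x2 * (x3 * x4) = x1 * x3 * (x2 * x4)"
  by (simp add: mult_ac)

context whl
begin

lemma recip: "chi p q * chi q p = 1"
proof -
  have "Legendre (int p) (int q) * Legendre (int q) (int p) = (-1::int) ^ ((p - 1) div 2 * ((q - 1) div 2))"
    by (rule Quadratic_Reciprocity[OF pp p2 pq q2 pq_ne])
  moreover have "even ((p - 1) div 2)" using p4 by presburger
  ultimately show ?thesis unfolding chi_def by (simp add: mult.commute)
qed

lemma chi_m1: "chi p (p - 1) = 1" "chi q (q - 1) = -1"
proof -
  have "chi p (p - 1) = Legendre (-1) (int p)" unfolding chi_def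
    by (rule Leg_cong[OF pp p2]) (use p2 in \<open>simp add: cong_def of_nat_diff\<close>)
  also have "\<dots> = (-1) ^ ((p - 1) div 2)" by (rule Leg_minus1[OF pp p2])
  finally have "chi p (p - 1) = (-1) ^ ((p - 1) div 2)" .
  moreover have "even ((p - 1) div 2)" using p4 by presburger
  ultimately show "chi p (p - 1) = 1" by simp
  have "chi q (q - 1) = Legendre (-1) (int q)" unfolding chi_def
    by (rule Leg_cong[OF pq q2]) (use q2 in \<open>simp add: cong_def of_nat_diff\<close>)
  also have "\<dots> = (-1) ^ ((q - 1) div 2)" by (rule Leg_minus1[OF pq q2])
  finally have "chi q (q - 1) = (-1) ^ ((q - 1) div 2)" .
  moreover have "odd ((q - 1) div 2)" using q4 by presburger
  ultimately show "chi q (q - 1) = -1" by simp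
qed

lemma U_term:
  assumes ab: "a < p" "b < q"
  shows "[chi p ((q * a + p * b) mod (p * q)) * chi q ((q * a + p * b) mod (p * q)) * 2 ^ ((q * a + p * b) mod (p * q))
          = chi p a * (2 ^ q) ^ a * (chi q b * (2 ^ p) ^ b)] (mod (2 ^ (p * q) - 1 :: int))"
proof -
  define N where "N = p * q"
  define M where "M = (2::int) ^ N - 1"
  define v where "v = q * a + p * b"
  have per: "[(2::int) ^ N = 1] (mod M)" unfolding M_def by (simp add: cong_iff_dvd_diff)
  have c1: "chi p (v mod N) = chi p q * chi p a"
  proof -
    have "(v mod N) mod p = v mod p" unfolding N_def by (rule mod_mod_cancel) simp
    also have "v mod p = (q * a) mod p" unfolding v_def by simp
    finally have "[v mod N = q * a] (mod p)" unfolding cong_def .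
    hence "chi p (v mod N) = chi p (q * a)" by (rule chi_cong[OF pp p2])
    thus ?thesis using chi_mult[OF pp p2] by simp
  qed
  have c2: "chi q (v mod N) = chi q p * chi q b"
  proof -
    have "(v mod N) mod q = v mod q" unfolding N_def by (rule mod_mod_cancel) simp
    also have "v mod q = (p * b) mod q" unfolding v_def by simp
    finally have "[v mod N = p * b] (mod q)" unfolding cong_def .
    hence "chi q (v mod N) = chi q (p * b)" by (rule chi_cong[OF pq q2])
    thus ?thesis using chi_mult[OF pq q2] by simp
  qed
  have c3: "[(2::int) ^ (v mod N) = (2 ^ q) ^ a * (2 ^ p) ^ b] (mod M)"
  proof -
    have A: "[(2::int) ^ v = 2 ^ (v mod N)] (mod M)" by (rule pow_mod_period[OF per])
    have B: "(2::int) ^ v = (2 ^ q) ^ a * (2 ^ p) ^ b"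
    proof -
      have "(2::int) ^ v = 2 ^ (q * a) * 2 ^ (p * b)" unfolding v_def by (rule power_add)
      also have "(2::int) ^ (q * a) = (2 ^ q) ^ a" by (rule power_mult)
      also have "(2::int) ^ (p * b) = (2 ^ p) ^ b" by (rule power_mult)
      finally show ?thesis .
    qed
    show ?thesis using cong_sym[OF A] unfolding B .
  qed
  have "chi p (v mod N) * chi q (v mod N) * 2 ^ (v mod N) =
        (chi p q * chi q p) * (chi p a * chi q b) * 2 ^ (v mod N)"
    unfolding c1 c2 by (rule ac4)
  also have "\<dots> = chi p a * chi q b * 2 ^ (v mod N)" using recip by simp
  also have "[\<dots> = chi p a * chi q b * ((2 ^ q) ^ a * (2 ^ p) ^ b)] (mod M)"
    using c3 by (intro cong_mult cong_refl)
  also have "chi p a * chi q b * ((2 ^ q) ^ a * (2 ^ p) ^ b) = chi p a * (2 ^ q) ^ a * (chi q b * (2 ^ p) ^ b)"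
    by (rule ac5)
  finally show ?thesis unfolding M_def N_def v_def .
qed

lemma U_cong:
  "[(\<Sum>u<p * q. chi p u * chi q u * 2 ^ u) =
    (\<Sum>a<p. chi p a * (2 ^ q) ^ a) * (\<Sum>b<q. chi q b * (2 ^ p) ^ b)] (mod (2 ^ (p * q) - 1 :: int))"
proof -
  have p0: "p > 0" and q0: "q > 0" using p2 q2 by auto
  define F :: "nat \<Rightarrow> int" where "F u = chi p u * chi q u * 2 ^ u" for u
  define h :: "nat \<times> nat \<Rightarrow> nat" where "h = (\<lambda>(a, b). (q * a + p * b) mod (p * q))"
  define T :: "nat \<times> nat \<Rightarrow> int" where "T = (\<lambda>(a, b). chi p a * (2 ^ q) ^ a * (chi q b * (2 ^ p) ^ b))"
  define M :: int where "M = 2 ^ (p * q) - 1"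
  have bij: "bij_betw h ({..<p} \<times> {..<q}) {..<p * q}" unfolding h_def by (rule bij_crt[OF cop_pq p0 q0])
  have e1: "(\<Sum>x\<in>{..<p} \<times> {..<q}. F (h x)) = (\<Sum>u<p * q. F u)"
    by (rule sum.reindex_bij_betw[OF bij])
  have e2: "[(\<Sum>x\<in>{..<p} \<times> {..<q}. F (h x)) = (\<Sum>x\<in>{..<p} \<times> {..<q}. T x)] (mod M)"
  proof (rule cong_sum)
    fix x assume "x \<in> {..<p} \<times> {..<q}"
    then obtain a b where x: "x = (a, b)" "a < p" "b < q" by auto
    have "F (h x) = chi p ((q * a + p * b) mod (p * q)) * chi q ((q * a + p * b) mod (p * q)) * 2 ^ ((q * a + p * b) mod (p * q))"
      unfolding F_def h_def x(1) by simp
    moreover have "T x = chi p a * (2 ^ q) ^ a * (chi q b * (2 ^ p) ^ b)" unfolding T_def x(1) by simp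
    ultimately show "[F (h x) = T x] (mod M)" unfolding M_def using U_term[OF x(2,3)] by simp
  qed
  have e3: "(\<Sum>x\<in>{..<p} \<times> {..<q}. T x) = (\<Sum>a<p. chi p a * (2 ^ q) ^ a) * (\<Sum>b<q. chi q b * (2 ^ p) ^ b)"
    unfolding T_def by (simp only: sum_product sum.cartesian_product)
  have "[(\<Sum>u<p * q. F u) = (\<Sum>a<p. chi p a * (2 ^ q) ^ a) * (\<Sum>b<q. chi q b * (2 ^ p) ^ b)] (mod M)"
    using e2 unfolding e1 e3 .
  thus ?thesis unfolding F_def M_def .
qed

lemma idx_sum:
  "(\<Sum>i<p * q. (if q dvd i then chi p q * chi p i * 2 ^ i else 0)) = (\<Sum>a<p. chi p a * (2 ^ q) ^ a :: int)"
  "(\<Sum>i<p * q. (if p dvd i then chi q p * chi q i * 2 ^ i else 0)) = (\<Sum>b<q. chi q b * (2 ^ p) ^ b :: int)"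
proof -
  have npq: "\<not> p dvd q" and nqp: "\<not> q dvd p" using pp pq pq_ne primes_dvd_imp_eq by blast+
  have q0: "q > 0" and p0: "p > 0" using p2 q2 by auto
  have "(\<Sum>i<p * q. (if q dvd i then chi p q * chi p i * 2 ^ i else (0::int))) =
        (\<Sum>i<q * p. (if q dvd i then chi p q * chi p i * 2 ^ i else 0))" by (simp add: mult.commute)
  also have "\<dots> = (\<Sum>y<p. chi p q * chi p (q * y) * 2 ^ (q * y))" by (rule sum_dvd_idx[OF q0])
  also have "\<dots> = (\<Sum>a<p. chi p a * (2 ^ q) ^ a)"
  proof (rule sum.cong[OF refl])
    fix y
    have "chi p q * chi p (q * y) * 2 ^ (q * y) = (chi p q * chi p q) * chi p y * 2 ^ (q * y)"
      using chi_mult[OF pp p2, of q y] by (simp add: mult_ac)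
    also have "\<dots> = chi p y * (2 ^ q) ^ y" using chi_sq[OF npq] by (simp add: power_mult)
    finally show "chi p q * chi p (q * y) * 2 ^ (q * y) = chi p y * (2 ^ q) ^ y" .
  qed
  finally show "(\<Sum>i<p * q. (if q dvd i then chi p q * chi p i * 2 ^ i else 0)) = (\<Sum>a<p. chi p a * (2 ^ q) ^ a :: int)" .
  have "(\<Sum>i<p * q. (if p dvd i then chi q p * chi q i * 2 ^ i else (0::int))) =
        (\<Sum>y<q. chi q p * chi q (p * y) * 2 ^ (p * y))" by (rule sum_dvd_idx[OF p0])
  also have "\<dots> = (\<Sum>b<q. chi q b * (2 ^ p) ^ b)"
  proof (rule sum.cong[OF refl])
    fix y
    have "chi q p * chi q (p * y) * 2 ^ (p * y) = (chi q p * chi q p) * chi q y * 2 ^ (p * y)"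
      using chi_mult[OF pq q2, of p y] by (simp add: mult_ac)
    also have "\<dots> = chi q y * (2 ^ p) ^ y" using chi_sq[OF nqp] by (simp add: power_mult)
    finally show "chi q p * chi q (p * y) * 2 ^ (p * y) = chi q y * (2 ^ p) ^ y" .
  qed
  finally show "(\<Sum>i<p * q. (if p dvd i then chi q p * chi q i * 2 ^ i else 0)) = (\<Sum>b<q. chi q b * (2 ^ p) ^ b :: int)" .
qed

lemma S_cong:
  "[2 * (\<Sum>i<p * q. int (wh_seq p q g i) * 2 ^ i) =
     - ((1 + (\<Sum>a<p. chi p a * (2 ^ q) ^ a)) * (1 + (\<Sum>b<q. chi q b * (2 ^ p) ^ b)))] (mod (2 ^ (p * q) - 1 :: int))"
proof -
  define N where "N = p * q"
  define M :: int where "M = 2 ^ N - 1"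
  define Gp :: int where "Gp = (\<Sum>a<p. chi p a * (2 ^ q) ^ a)"
  define Gq :: int where "Gq = (\<Sum>b<q. chi q b * (2 ^ p) ^ b)"
  define U :: int where "U = (\<Sum>u<p * q. chi p u * chi q u * 2 ^ u)"
  have N0: "N > 0" unfolding N_def using p2 q2 by simp
  have "2 * (\<Sum>i<N. int (wh_seq p q g i) * 2 ^ i) = (\<Sum>i<N. (2 * int (wh_seq p q g i)) * 2 ^ i)"
    by (simp add: sum_distrib_left mult.assoc)
  also have "\<dots> = (\<Sum>i<N. (2 ^ i - (if i = 0 then 1 else 0)) - chi p i * chi q i * 2 ^ i
      - (if q dvd i then chi p q * chi p i * 2 ^ i else 0) - (if p dvd i then chi q p * chi q i * 2 ^ i else 0))"
  proof (rule sum.cong[OF refl])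
    fix i assume "i \<in> {..<N}"
    hence i: "i < p * q" unfolding N_def by simp
    show "2 * int (wh_seq p q g i) * 2 ^ i = (2 ^ i - (if i = 0 then 1 else 0)) - chi p i * chi q i * 2 ^ i
      - (if q dvd i then chi p q * chi p i * 2 ^ i else 0) - (if p dvd i then chi q p * chi q i * 2 ^ i else 0)"
      unfolding seq_val[OF i] by (simp add: algebra_simps)
  qed
  also have "\<dots> = ((\<Sum>i<N. 2 ^ i) - (\<Sum>i<N. (if i = 0 then 1 else 0))) - U - Gp - Gq"
    unfolding U_def Gp_def Gq_def idx_sum[symmetric] N_def by (simp only: sum_subtractf)
  also have "(\<Sum>i<N. (2::int) ^ i) = M" unfolding M_def using power_diff_1_eq[of "2::int" N] by simp
  also have "(\<Sum>i<N. (if i = 0 then 1 else 0)) = (1::int)" using N0 by (simp add: sum.delta)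
  finally have E: "2 * (\<Sum>i<N. int (wh_seq p q g i) * 2 ^ i) = M - 1 - U - Gp - Gq" .
  have "[M - 1 - U - Gp - Gq = M - 1 - Gp * Gq - Gp - Gq] (mod M)"
    using U_cong unfolding U_def Gp_def Gq_def M_def N_def
    by (intro cong_diff cong_refl)
  also have "M - 1 - Gp * Gq - Gp - Gq = M + (- ((1 + Gp) * (1 + Gq)))" by (simp add: algebra_simps)
  also have "[M + (- ((1 + Gp) * (1 + Gq))) = 0 + (- ((1 + Gp) * (1 + Gq)))] (mod M)"
    by (intro cong_add cong_refl) (simp add: cong_0_iff)
  finally show ?thesis using E unfolding N_def M_def Gp_def Gq_def by simp
qed

end




lemma gauss_case:
  fixes d r s n0 :: nat
  assumes d: "prime d" and r: "prime r" "r > 2" and s: "prime s" and rs: "r \<noteq> s"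
    and one: "[2 ^ (r * s) = 1] (mod d)" and n0: "chi r n0 = -1"
    and dv: "int d dvd 1 + (\<Sum>a<r. chi r a * (2 ^ s) ^ a)"
  shows "r dvd ord d 2" "[1 = chi r (r - 1) * int r] (mod int d)"
proof -
  define G :: int where "G = (\<Sum>a<r. chi r a * (2 ^ s) ^ a)"
  have dI: "prime (int d)" using d by simp
  have Gm: "[G = -1] (mod int d)" using dv unfolding G_def
    by (simp add: cong_iff_dvd_diff add.commute)
  have n1: "\<not> [2 ^ s = 1] (mod d)"
  proof
    assume h: "[2 ^ s = 1] (mod d)"
    hence hI: "[(2::int) ^ s = 1] (mod int d)" using cong_int_iff[of "2 ^ s" 1 d] by simp
    have "[G = (\<Sum>a<r. chi r a * 1 ^ a)] (mod int d)" unfolding G_def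
      by (intro cong_sum cong_mult cong_refl cong_pow hI)
    also have "(\<Sum>a<r. chi r a * 1 ^ a) = 0" using chi_sum_zero[OF r n0] by simp
    finally have "[G = 0] (mod int d)" .
    hence "[-1 = (0::int)] (mod int d)" using Gm by (meson cong_sym cong_trans)
    hence "int d dvd 1" by (simp add: cong_iff_dvd_diff)
    thus False using d by simp
  qed
  have o1: "ord d 2 dvd r * s" using one ord_divides by blast
  show "r dvd ord d 2"
  proof (rule ccontr)
    assume "\<not> r dvd ord d 2"
    hence "coprime (ord d 2) r" using prime_imp_coprime[OF r(1) \<open>\<not> r dvd ord d 2\<close>] by (simp add: coprime_commute)
    hence "ord d 2 dvd s" using o1 coprime_dvd_mult_right_iff by blast
    hence "[2 ^ s = 1] (mod d)" using ord_divides by blast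
    thus False using n1 by simp
  qed
  define z :: int where "z = 2 ^ s"
  have zr: "[z ^ r = 1] (mod int d)"
  proof -
    have "[int (2 ^ (r * s)) = int 1] (mod int d)" using one cong_int_iff by blast
    thus ?thesis unfolding z_def by (simp add: power_mult[symmetric] mult.commute)
  qed
  have z1: "\<not> [z = 1] (mod int d)"
  proof
    assume "[z = 1] (mod int d)"
    hence "[int (2 ^ s) = int 1] (mod int d)" unfolding z_def by simp
    hence "[2 ^ s = 1] (mod d)" using cong_int_iff by blast
    thus False using n1 by simp
  qed
  have gs: "[G ^ 2 = chi r (r - 1) * int r] (mod int d)"
    using gauss_sq[OF dI r zr z1 n0] unfolding G_def z_def .
  have "[G ^ 2 = (-1) ^ 2] (mod int d)" using Gm by (rule cong_pow)
  hence "[1 = G ^ 2] (mod int d)" by (simp add: cong_sym)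
  from cong_trans[OF this gs] show "[1 = chi r (r - 1) * int r] (mod int d)" .
qed

context whl
begin

lemma no_common:
  assumes d: "prime d" and dM: "d dvd 2 ^ (p * q) - 1"
    and dS: "d dvd (\<Sum>i<p * q. wh_seq p q g i * 2 ^ i)"
  shows False
proof -
  define N where "N = p * q"
  define Gp :: int where "Gp = (\<Sum>a<p. chi p a * (2 ^ q) ^ a)"
  define Gq :: int where "Gq = (\<Sum>b<q. chi q b * (2 ^ p) ^ b)"
  have N0: "N > 0" unfolding N_def using p2 q2 by simp
  have dI: "prime (int d)" using d by simp
  have pow1: "(1::nat) \<le> 2 ^ N" by simp
  have MI: "int (2 ^ N - 1) = (2::int) ^ N - 1" using pow1 by (simp add: of_nat_diff)
  have SI: "int (\<Sum>i<N. wh_seq p q g i * 2 ^ i) = (\<Sum>i<N. int (wh_seq p q g i) * 2 ^ i)"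
    by simp
  have dMI: "int d dvd (2::int) ^ N - 1" using dM MI unfolding N_def by (metis int_dvd_int_iff)
  have dSI: "int d dvd (\<Sum>i<N. int (wh_seq p q g i) * 2 ^ i)"
    using dS SI unfolding N_def by (metis int_dvd_int_iff)
  have C: "[2 * (\<Sum>i<N. int (wh_seq p q g i) * 2 ^ i) = - ((1 + Gp) * (1 + Gq))] (mod int d)"
    using cong_dvd_modulus[OF S_cong dMI[unfolded N_def]] unfolding N_def Gp_def Gq_def .
  have "[2 * (\<Sum>i<N. int (wh_seq p q g i) * 2 ^ i) = 0] (mod int d)"
    using dSI by (simp add: cong_0_iff)
  hence "[- ((1 + Gp) * (1 + Gq)) = 0] (mod int d)" using C by (meson cong_sym cong_trans)
  hence "int d dvd (1 + Gp) * (1 + Gq)" by (simp add: cong_0_iff)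
  hence cases: "int d dvd 1 + Gp \<or> int d dvd 1 + Gq" using prime_dvd_multD[OF dI] by blast
  have "d dvd 2 ^ N - 1" using dM N_def by simp
  hence oneN: "[2 ^ N = 1] (mod d)" using cong_altdef_nat[OF pow1] by blast
  have d2: "\<not> d dvd 2"
  proof
    assume d2: "d dvd 2"
    have A: "d dvd 2 ^ N" using dvd_trans[OF d2 dvd_power[of N 2]] N0 by blast
    have B: "d dvd 2 ^ N - 1" using dM N_def by simp
    have "d dvd 2 ^ N - (2 ^ N - 1)" by (rule dvd_diff_nat[OF A B])
    moreover have "(2::nat) ^ N - (2 ^ N - 1) = 1" using pow1 by simp
    ultimately have "d dvd 1" by simp
    thus False using d by simp
  qed
  have ferm: "[2 ^ (d - 1) = 1] (mod d)" using fermat_theorem[OF d d2] .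
  have od: "ord d 2 dvd d - 1" using ferm ord_divides by blast
  have d1: "d - 1 > 0" using d prime_gt_1_nat by simp
  have npg: "chi p g = -1" using chi_prim_pow[OF pp p2 gp, of 1] by simp
  have nqg: "chi q g = -1" using chi_prim_pow[OF pq q2 gq, of 1] by simp
  show False
  proof (cases "int d dvd 1 + Gp")
    case True
    have one: "[2 ^ (p * q) = 1] (mod d)" using oneN N_def by simp
    have A: "p dvd ord d 2" and B: "[1 = chi p (p - 1) * int p] (mod int d)"
      using gauss_case[OF d pp p2 pq pq_ne one npg] True unfolding Gp_def by auto
    have "[1 = int p] (mod int d)" using B chi_m1(1) by simp
    hence "int d dvd int p - 1" by (simp add: cong_iff_dvd_diff dvd_diff_commute)
    hence "int d dvd int (p - 1)" using p2 by (simp add: of_nat_diff)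
    hence "d dvd p - 1" by simp
    hence "d \<le> p - 1" using p2 by (simp add: dvd_imp_le)
    moreover have "p \<le> d - 1" using dvd_imp_le[OF dvd_trans[OF A od] d1] .
    ultimately show False using p2 by simp
  next
    case False
    hence T: "int d dvd 1 + Gq" using cases by blast
    have one: "[2 ^ (q * p) = 1] (mod d)" using oneN N_def by (simp add: mult.commute)
    have A: "q dvd ord d 2" and B: "[1 = chi q (q - 1) * int q] (mod int d)"
      using gauss_case[OF d pq q2 pp pq_ne[symmetric] one nqg] T unfolding Gq_def by auto
    have "[1 = - int q] (mod int d)" using B chi_m1(2) by simp
    hence "int d dvd int q + 1" by (simp add: cong_iff_dvd_diff add.commute)
    hence "int d dvd int (q + 1)" by (simp only: of_nat_add of_nat_1)
    hence "d dvd q + 1" by (simp only: int_dvd_int_iff)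
    hence le: "d \<le> q + 1" by (simp add: dvd_imp_le)
    moreover have "q \<le> d - 1" using dvd_imp_le[OF dvd_trans[OF A od] d1] .
    ultimately have dq: "d = q + 1" using d1 by linarith
    have "odd q" using prime_odd_nat[OF pq q2] .
    hence "2 dvd d" using dq by simp
    hence "2 = d" using primes_dvd_imp_eq[OF two_is_prime_nat d] by blast
    thus False using d2 by simp
  qed
qed

end



theorem theorem2:
  fixes p q g :: nat
  assumes "prime p" and "prime q"
    and "p mod 4 = 1" and "q mod 4 = 3"
    and "q = p + 2"
    and "residue_primroot p g" and "residue_primroot q g"
  shows "two_adic_complexity (wh_seq p q g) (p * q) = int (p * q)"
proof -
  have W: "whl p q g" using assms by (simp add: whl_def)
  define N where "N = p * q"
  define M :: nat where "M = 2 ^ N - 1"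
  define S :: nat where "S = (\<Sum>i<N. wh_seq p q g i * 2 ^ i)"
  have G: "gcd M S = 1"
  proof (rule ccontr)
    assume "gcd M S \<noteq> 1"
    then obtain d where d: "prime d" "d dvd gcd M S" using prime_factor_nat by blast
    have "d dvd 2 ^ (p * q) - 1" using d(2) unfolding M_def N_def by simp
    moreover have "d dvd (\<Sum>i<p * q. wh_seq p q g i * 2 ^ i)" using d(2) unfolding S_def N_def by simp
    ultimately show False using whl.no_common[OF W d(1)] by blast
  qed
  have pow1: "(1::nat) \<le> 2 ^ N" by simp
  have MD: "M div gcd M S = M" using G by simp
  have R0: "real M + 1 = 2 ^ N" unfolding M_def using pow1 by (simp add: of_nat_diff)
  have R: "real (M div gcd M S) + 1 = 2 ^ N" using MD R0 by simp
  have L: "log 2 ((2::real) ^ N) = real N" by (rule log_pow_cancel) auto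
  have "two_adic_complexity (wh_seq p q g) N = \<lfloor>log 2 (real (M div gcd M S) + 1)\<rfloor>"
    unfolding two_adic_complexity_def Let_def M_def S_def by (rule refl)
  also have "\<dots> = \<lfloor>real N\<rfloor>" using R L by simp
  also have "\<dots> = int N" by (rule floor_of_nat)
  finally show ?thesis unfolding N_def .
qed

end
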